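(* Let $\beta$ be a positive integer and $c_0>0$. There exist $\lambda=\lambda_{\beta,c_0}\in(0,\frac12)$ and $n_0$ such that for all $n\ge n_0$ and all $p$ with $(1+c_0)\frac{\log n}{n}\le p\le\frac12$, if $A$ is an $n\times n$ random matrix with i.i.d. Bernoulli$(p)$ entries then $$\mathbb{P}\{|\mathscr L_A(\lambda pn)|\ge\beta+1\}\le\big((1-p)^n n\big)^{\beta+3/4}.$$
   Context: For real $k\ge0$, $\mathscr L_A(k)$ is the set of column indices $j$ such that the $j$-th column of $A$ has at most $k$ nonzero entries. Bernoulli$(p)$ entries equal $1$ w.p. $p$ and $0$ otherwise. *)

theory Defs
  imports "HOL-Probability.Probability"
begin

text \<open>An n x n matrix is a function on index pairs (i,j) (row i, column j),
  with i, j ranging over {0..<n}.\<close>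

definition bernoulli_matrix :: "nat \<Rightarrow> real \<Rightarrow> (nat \<times> nat \<Rightarrow> real) pmf" where
  "bernoulli_matrix n p =
     Pi_pmf ({0..<n} \<times> {0..<n}) 0
       (\<lambda>_. map_pmf (\<lambda>b. if b then 1 else 0) (bernoulli_pmf p))"

definition sparse_cols :: "nat \<Rightarrow> (nat \<times> nat \<Rightarrow> real) \<Rightarrow> real \<Rightarrow> nat set" where
  "sparse_cols n A k =
     {j \<in> {0..<n}. real (card {i \<in> {0..<n}. A (i, j) \<noteq> 0}) \<le> k}"

end

theory Submission
  imports Defs
begin

lemma entry_prob:
  assumes "0 \<le> p" "p \<le> 1"
  shows "measure_pmf.prob (map_pmf (\<lambda>b. if b then 1 else 0) (bernoulli_pmf p)) {v::real. v \<noteq> 0} = p"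
    and "measure_pmf.prob (map_pmf (\<lambda>b. if b then 1 else 0) (bernoulli_pmf p)) {0::real} = 1 - p"
proof -
  have "(\<lambda>b. if b then 1 else 0::real) -` {v::real. v \<noteq> 0} = {True}" by auto
  then show "measure_pmf.prob (map_pmf (\<lambda>b. if b then 1 else 0) (bernoulli_pmf p)) {v::real. v \<noteq> 0} = p"
    using assms by (simp add: measure_map_pmf measure_pmf_single)
  have "(\<lambda>b. if b then 1 else 0::real) -` {0::real} = {False}" by auto
  then show "measure_pmf.prob (map_pmf (\<lambda>b. if b then 1 else 0) (bernoulli_pmf p)) {0::real} = 1 - p"
    using assms by (simp only: measure_map_pmf) (simp add: measure_pmf_single)
qed

lemma pattern_prob:
  assumes p: "0 \<le> p" "p \<le> 1" and S: "S \<subseteq> {0..<n}" and Q: "\<forall>j\<in>S. Q j \<subseteq> {0..<n}"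
  shows "measure_pmf.prob (bernoulli_matrix n p)
           {A. \<forall>j\<in>S. \<forall>i\<in>{0..<n}. (A (i,j) \<noteq> 0) = (i \<in> Q j)}
         = (\<Prod>j\<in>S. p ^ card (Q j) * (1-p) ^ (n - card (Q j)))"
proof -
  define N where "N = {0..<n::nat}"
  define B where "B = (\<lambda>(i,j). if j \<in> S then (if i \<in> Q j then {v::real. v \<noteq> 0} else {v. v = 0}) else UNIV)"
  define ent where "ent = (\<lambda>_::nat\<times>nat. map_pmf (\<lambda>b. if b then 1 else (0::real)) (bernoulli_pmf p))"
  have eq: "{A::nat\<times>nat\<Rightarrow>real. \<forall>j\<in>S. \<forall>i\<in>{0..<n}. (A (i,j) \<noteq> 0) = (i \<in> Q j)} = Pi (N \<times> N) B"
  proof (intro equalityI subsetI)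
    fix A :: "nat\<times>nat\<Rightarrow>real" assume "A \<in> {A. \<forall>j\<in>S. \<forall>i\<in>{0..<n}. (A (i,j) \<noteq> 0) = (i \<in> Q j)}"
    then have h: "\<And>i j. j \<in> S \<Longrightarrow> i < n \<Longrightarrow> (A (i,j) \<noteq> 0) = (i \<in> Q j)" by auto
    show "A \<in> Pi (N \<times> N) B" unfolding Pi_def B_def N_def
      using h by (auto split: if_splits)
  next
    fix A :: "nat\<times>nat\<Rightarrow>real" assume "A \<in> Pi (N \<times> N) B"
    then have h: "\<And>i j. i < n \<Longrightarrow> j < n \<Longrightarrow> A (i,j) \<in> B (i,j)" unfolding Pi_def N_def by auto
    show "A \<in> {A. \<forall>j\<in>S. \<forall>i\<in>{0..<n}. (A (i,j) \<noteq> 0) = (i \<in> Q j)}"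
    proof (intro CollectI ballI)
      fix j i assume j: "j \<in> S" and i: "i \<in> {0..<n}"
      have "j < n" using j S by auto
      then have "A (i,j) \<in> B (i,j)" using h i by auto
      then show "(A (i,j) \<noteq> 0) = (i \<in> Q j)" using j unfolding B_def by (auto split: if_splits)
    qed
  qed
  have "measure_pmf.prob (bernoulli_matrix n p) (Pi (N \<times> N) B)
      = (\<Prod>x\<in>N\<times>N. measure_pmf.prob (ent x) (B x))"
    unfolding bernoulli_matrix_def N_def ent_def by (rule measure_Pi_pmf_Pi) simp
  also have "\<dots> = (\<Prod>(i,j)\<in>N\<times>N. if j \<in> S then (if i \<in> Q j then p else 1 - p) else 1)"
    by (intro prod.cong refl) (auto simp: B_def ent_def entry_prob[OF p] simp del: measure_map_pmf)
  also have "\<dots> = (\<Prod>i\<in>N. \<Prod>j\<in>N. if j \<in> S then (if i \<in> Q j then p else 1 - p) else 1)"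
    by (simp add: prod.cartesian_product)
  also have "\<dots> = (\<Prod>j\<in>N. \<Prod>i\<in>N. if j \<in> S then (if i \<in> Q j then p else 1 - p) else 1)"
    by (rule prod.swap)
  also have "\<dots> = (\<Prod>j\<in>N. if j \<in> S then (\<Prod>i\<in>N. if i \<in> Q j then p else 1 - p) else 1)"
    by (intro prod.cong refl) auto
  also have "\<dots> = (\<Prod>j\<in>S. \<Prod>i\<in>N. if i \<in> Q j then p else 1 - p)"
    using S by (simp add: prod.If_cases N_def Int_absorb1)
  also have "\<dots> = (\<Prod>j\<in>S. p ^ card (Q j) * (1-p) ^ (n - card (Q j)))"
  proof (intro prod.cong refl)
    fix j assume j: "j \<in> S"
    have Oj: "Q j \<subseteq> N" using Q j N_def by auto
    have fin: "finite (Q j)" using Oj N_def finite_subset by auto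
    have "(\<Prod>i\<in>N. if i \<in> Q j then p else 1 - p)
        = prod (\<lambda>_. p) (N \<inter> {i. i \<in> Q j}) * prod (\<lambda>_. 1 - p) (N \<inter> - {i. i \<in> Q j})"
      by (rule prod.If_cases) (simp add: N_def)
    also have "N \<inter> {i. i \<in> Q j} = Q j" using Oj by auto
    also have "N \<inter> - {i. i \<in> Q j} = N - Q j" by auto
    finally have e: "(\<Prod>i\<in>N. if i \<in> Q j then p else 1 - p) = (\<Prod>_\<in>Q j. p) * (\<Prod>_\<in>N - Q j. 1 - p)" .
    have "card (N - Q j) = n - card (Q j)" using Oj fin by (simp add: card_Diff_subset N_def)
    with e show "(\<Prod>i\<in>N. if i \<in> Q j then p else 1 - p) = p ^ card (Q j) * (1-p) ^ (n - card (Q j))"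
      by simp
  qed
  finally show ?thesis using eq by simp
qed

lemma event_bound:
  assumes p: "0 \<le> p" "p \<le> 1"
  shows "measure_pmf.prob (bernoulli_matrix n p) {A. card (sparse_cols n A k) \<ge> b}
     \<le> real (n choose b) * (\<Sum>T\<in>{T. T \<subseteq> {0..<n} \<and> real (card T) \<le> k}. p ^ card T * (1-p) ^ (n - card T)) ^ b"
proof -
  define N where "N = {0..<n::nat}"
  define F where "F = {T. T \<subseteq> N \<and> real (card T) \<le> k}"
  define SS where "SS = {S. S \<subseteq> N \<and> card S = b}"
  define E where "E = (\<lambda>S Q. {A::nat\<times>nat\<Rightarrow>real. \<forall>j\<in>S. \<forall>i\<in>{0..<n}. (A (i,j) \<noteq> 0) = (i \<in> Q j)})"
  define g where "g = (\<lambda>T::nat set. p ^ card T * (1-p) ^ (n - card T))"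
  have finN: "finite N" by (simp add: N_def)
  have finF: "finite F" unfolding F_def by (rule finite_subset[of _ "Pow N"]) (use finN in auto)
  have finSS: "finite SS" unfolding SS_def by (rule finite_subset[of _ "Pow N"]) (use finN in auto)
  have sub: "{A. card (sparse_cols n A k) \<ge> b} \<subseteq> (\<Union>S\<in>SS. \<Union>Q\<in>PiE S (\<lambda>_. F). E S Q)"
  proof
    fix A assume "A \<in> {A. card (sparse_cols n A k) \<ge> b}"
    then have c: "b \<le> card (sparse_cols n A k)" by simp
    obtain S where S: "S \<subseteq> sparse_cols n A k" "card S = b" "finite S"
      using obtain_subset_with_card_n[OF c] by blast
    define Q where "Q = restrict (\<lambda>j. {i\<in>N. A (i,j) \<noteq> 0}) S"
    have SN: "S \<subseteq> N" using S(1) unfolding sparse_cols_def N_def by auto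
    have "S \<in> SS" using SN S unfolding SS_def by auto
    moreover have "Q \<in> PiE S (\<lambda>_. F)"
      unfolding Q_def restrict_PiE_iff
    proof
      fix j assume "j \<in> S"
      then have "j \<in> sparse_cols n A k" using S(1) by auto
      then show "{i\<in>N. A (i,j) \<noteq> 0} \<in> F" unfolding sparse_cols_def F_def N_def by auto
    qed
    moreover have "A \<in> E S Q" unfolding E_def Q_def N_def by auto
    ultimately show "A \<in> (\<Union>S\<in>SS. \<Union>Q\<in>PiE S (\<lambda>_. F). E S Q)" by blast
  qed
  have "measure_pmf.prob (bernoulli_matrix n p) {A. card (sparse_cols n A k) \<ge> b}
      \<le> measure_pmf.prob (bernoulli_matrix n p) (\<Union>S\<in>SS. \<Union>Q\<in>PiE S (\<lambda>_. F). E S Q)"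
    by (rule measure_pmf.finite_measure_mono[OF sub]) simp
  also have "\<dots> \<le> (\<Sum>S\<in>SS. measure_pmf.prob (bernoulli_matrix n p) (\<Union>Q\<in>PiE S (\<lambda>_. F). E S Q))"
    by (rule measure_pmf.finite_measure_subadditive_finite[OF finSS]) simp
  also have "\<dots> \<le> (\<Sum>S\<in>SS. \<Sum>Q\<in>PiE S (\<lambda>_. F). measure_pmf.prob (bernoulli_matrix n p) (E S Q))"
  proof (rule sum_mono)
    fix S assume "S \<in> SS"
    then have "finite S" using finN unfolding SS_def by (auto intro: finite_subset)
    then have "finite (PiE S (\<lambda>_. F))" using finF by (simp add: finite_PiE)
    then show "measure_pmf.prob (bernoulli_matrix n p) (\<Union>Q\<in>PiE S (\<lambda>_. F). E S Q)
      \<le> (\<Sum>Q\<in>PiE S (\<lambda>_. F). measure_pmf.prob (bernoulli_matrix n p) (E S Q))"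
      by (rule measure_pmf.finite_measure_subadditive_finite) simp
  qed
  also have "\<dots> = (\<Sum>S\<in>SS. \<Sum>Q\<in>PiE S (\<lambda>_. F). \<Prod>j\<in>S. g (Q j))"
  proof (intro sum.cong refl)
    fix S Q assume S: "S \<in> SS" and Q: "Q \<in> PiE S (\<lambda>_. F)"
    have "S \<subseteq> {0..<n}" using S unfolding SS_def N_def by auto
    moreover have "\<forall>j\<in>S. Q j \<subseteq> {0..<n}" using Q unfolding F_def N_def by (auto simp: PiE_def Pi_def)
    ultimately show "measure_pmf.prob (bernoulli_matrix n p) (E S Q) = (\<Prod>j\<in>S. g (Q j))"
      unfolding E_def g_def by (rule pattern_prob[OF p])
  qed
  also have "\<dots> = (\<Sum>S\<in>SS. \<Prod>j\<in>S. \<Sum>T\<in>F. g T)"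
  proof (intro sum.cong refl)
    fix S assume "S \<in> SS"
    then have "finite S" using finN unfolding SS_def by (auto intro: finite_subset)
    then show "(\<Sum>Q\<in>PiE S (\<lambda>_. F). \<Prod>j\<in>S. g (Q j)) = (\<Prod>j\<in>S. \<Sum>T\<in>F. g T)"
      using prod_sum_PiE[of S "\<lambda>_. F" "\<lambda>_ T. g T"] finF by simp
  qed
  also have "\<dots> = (\<Sum>S\<in>SS. (\<Sum>T\<in>F. g T) ^ b)"
    by (intro sum.cong refl) (simp add: SS_def)
  also have "\<dots> = real (card SS) * (\<Sum>T\<in>F. g T) ^ b" by simp
  also have "card SS = n choose b" unfolding SS_def using n_subsets[OF finN, of b] by (simp add: N_def)
  finally show ?thesis unfolding F_def g_def N_def .
qed

lemma chernoff:
  assumes p: "0 \<le> p" "p \<le> 1" and s: "0 < s" "s \<le> 1"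
  shows "(\<Sum>T\<in>{T. T \<subseteq> {0..<n} \<and> real (card T) \<le> k}. p ^ card T * (1-p) ^ (n - card T))
         \<le> (1/s) powr k * (p * s + (1-p)) ^ n"
proof -
  define N where "N = {0..<n::nat}"
  define F where "F = {T. T \<subseteq> N \<and> real (card T) \<le> k}"
  have finN: "finite N" by (simp add: N_def)
  have "(\<Sum>T\<in>F. p ^ card T * (1-p) ^ (n - card T))
      \<le> (\<Sum>T\<in>F. (1/s) powr k * ((p * s) ^ card T * (1-p) ^ (n - card T)))"
  proof (rule sum_mono)
    fix T assume T: "T \<in> F"
    have pc: "p ^ card T = (1/s) ^ card T * (p * s) ^ card T"
      using s by (simp add: power_mult_distrib[symmetric])
    have "(1/s) ^ card T = (1/s) powr real (card T)" using s by (simp add: powr_realpow)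
    also have "\<dots> \<le> (1/s) powr k" using T s unfolding F_def by (intro powr_mono) auto
    finally have "(1/s) ^ card T \<le> (1/s) powr k" .
    then have "(1/s) ^ card T * ((p * s) ^ card T * (1-p) ^ (n - card T))
        \<le> (1/s) powr k * ((p * s) ^ card T * (1-p) ^ (n - card T))"
      using p s by (intro mult_right_mono) auto
    then show "p ^ card T * (1-p) ^ (n - card T) \<le> (1/s) powr k * ((p * s) ^ card T * (1-p) ^ (n - card T))"
      by (simp add: pc mult.assoc)
  qed
  also have "\<dots> \<le> (\<Sum>T\<in>Pow N. (1/s) powr k * ((p * s) ^ card T * (1-p) ^ (n - card T)))"
    by (rule sum_mono2) (use finN p s in \<open>auto simp: F_def\<close>)
  also have "\<dots> = (1/s) powr k * (\<Sum>T\<in>Pow N. (\<Prod>x\<in>T. p * s) * (\<Prod>x\<in>N-T. 1-p))"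
    unfolding sum_distrib_left
  proof (intro sum.cong refl)
    fix T assume "T \<in> Pow N"
    then have "card (N - T) = n - card T" using finN by (simp add: card_Diff_subset N_def finite_subset)
    then show "(1/s) powr k * ((p * s) ^ card T * (1-p) ^ (n - card T)) = (1/s) powr k * ((\<Prod>x\<in>T. p * s) * (\<Prod>x\<in>N-T. 1-p))"
      by simp
  qed
  also have "\<dots> = (1/s) powr k * (\<Prod>x\<in>N. p * s + (1-p))"
    using prod_add[OF finN, of "\<lambda>_. p * s" "\<lambda>_. 1 - p"] by simp
  also have "\<dots> = (1/s) powr k * (p * s + (1-p)) ^ n" by (simp add: N_def)
  finally show ?thesis unfolding F_def N_def .
qed

theorem proposition4p6:
  fixes \<beta> :: nat and c\<^sub>0 :: real
  assumes "\<beta> \<ge> 1" and "c\<^sub>0 > 0"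
  shows "\<exists>lam::real. 0 < lam \<and> lam < 1/2 \<and>
          (\<exists>n\<^sub>0::nat. \<forall>n\<ge>n\<^sub>0. \<forall>p::real.
             (1 + c\<^sub>0) * ln (real n) / real n \<le> p \<and> p \<le> 1/2 \<longrightarrow>
             measure_pmf.prob (bernoulli_matrix n p)
               {A. card (sparse_cols n A (lam * p * real n)) \<ge> \<beta> + 1}
             \<le> ((1 - p) ^ n * real n) powr (real \<beta> + 3/4))"
proof -
  define b where "b = \<beta> + 1"
  define \<delta> where "\<delta> = c\<^sub>0 / (1 + c\<^sub>0)"
  define s where "s = \<delta> / (12 * real b)"
  define lam where "lam = s ^ 2"
  have c0: "c\<^sub>0 > 0" by fact
  have \<delta>0: "0 < \<delta>" and \<delta>1: "\<delta> < 1" using c0 by (auto simp: \<delta>_def field_simps)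
  have b1: "real b \<ge> 1" by (simp add: b_def)
  have s0: "0 < s" using \<delta>0 b1 by (simp add: s_def)
  have s1: "s \<le> \<delta> / 12" unfolding s_def using \<delta>0 b1
    by (intro divide_left_mono) auto
  then have s1': "s < 1" using \<delta>1 by linarith
  have lam0: "0 < lam" using s0 by (simp add: lam_def)
  have "lam \<le> s" unfolding lam_def power2_eq_square using s0 s1' by (simp add: mult_le_cancel_right1)
  then have lam1: "lam < 1/2" using s1 \<delta>1 by linarith
  have bs: "12 * real b * s = \<delta>" using b1 by (simp add: s_def)
  show ?thesis
  proof (intro exI[of _ lam] conjI lam0 lam1 exI[of _ "1::nat"] allI impI)
    fix n :: nat and p :: real
    assume n: "1 \<le> n" and hp: "(1 + c\<^sub>0) * ln (real n) / real n \<le> p \<and> p \<le> 1/2"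
    have nr: "real n \<ge> 1" using n by simp
    have lnn: "ln (real n) \<ge> 0" using nr by simp
    have p2: "p \<le> 1/2" using hp by simp
    have t_ge: "(1 + c\<^sub>0) * ln (real n) \<le> p * real n"
      using hp nr by (simp add: divide_le_eq)
    have p0: "0 \<le> p"
    proof -
      have "0 \<le> (1 + c\<^sub>0) * ln (real n) / real n" using c0 lnn nr by simp
      then show ?thesis using hp by linarith
    qed
    have p1: "p \<le> 1" using p2 by simp
    define t where "t = p * real n"
    have t0: "t \<ge> 0" using p0 nr by (simp add: t_def)
    define x where "x = (1 - p) ^ n"
    have x0: "x > 0" using p2 by (simp add: x_def)
    define q where "q = (\<Sum>T\<in>{T. T \<subseteq> {0..<n} \<and> real (card T) \<le> lam * p * real n}. p ^ card T * (1-p) ^ (n - card T))"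
    have q0: "q \<ge> 0" unfolding q_def using p0 p1 by (intro sum_nonneg) auto
    have P: "measure_pmf.prob (bernoulli_matrix n p) {A. card (sparse_cols n A (lam * p * real n)) \<ge> \<beta> + 1}
        \<le> real (n choose b) * q ^ b"
      unfolding q_def b_def by (rule event_bound[OF p0 p1])
    have q1: "q \<le> (1/s) powr (lam * p * real n) * (p * s + (1-p)) ^ n"
      unfolding q_def by (rule chernoff[OF p0 p1 s0]) (use s1' in simp)
    have e1: "(1/s) powr (lam * p * real n) \<le> exp (s * t)"
    proof -
      have "(1/s) powr (lam * p * real n) = exp (lam * t * ln (1/s))"
        using s0 by (simp add: powr_def t_def mult.assoc)
      also have "lam * t * ln (1/s) \<le> lam * t * (1/s)"
      proof -
        have "ln (1/s) \<le> 1/s - 1" using s0 by (intro ln_le_minus_one) simp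
        then have "ln (1/s) \<le> 1/s" by linarith
        then show ?thesis using lam0 t0 by (intro mult_left_mono) auto
      qed
      also have "lam * t * (1/s) = s * t" using s0 by (simp add: lam_def power2_eq_square)
      finally show ?thesis by simp
    qed
    have e2: "(p * s + (1-p)) ^ n \<le> x * exp (2 * s * t)"
    proof -
      have "p * s + (1-p) \<le> (1-p) * (1 + 2 * p * s)"
      proof -
        have "0 \<le> p * s * (1 - 2 * p)" using p0 s0 p2 by (intro mult_nonneg_nonneg) auto
        then show ?thesis by (simp add: algebra_simps)
      qed
      also have "\<dots> \<le> (1-p) * exp (2 * p * s)"
        using p1 by (intro mult_left_mono) (auto intro: exp_ge_add_one_self)
      finally have b: "p * s + (1-p) \<le> (1-p) * exp (2 * p * s)" .
      have "(p * s + (1-p)) ^ n \<le> ((1-p) * exp (2 * p * s)) ^ n"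
        using b p0 p1 s0 by (intro power_mono) auto
      also have "\<dots> = x * exp (2 * p * s) ^ n" by (simp add: x_def power_mult_distrib)
      also have "exp (2 * p * s) ^ n = exp (2 * s * t)"
        by (simp add: t_def exp_of_nat_mult[symmetric] mult_ac)
      finally show ?thesis .
    qed
    have qb: "q \<le> x * exp (3 * s * t)"
    proof -
      have "(1/s) powr (lam * p * real n) * (p * s + (1-p)) ^ n \<le> exp (s * t) * (x * exp (2 * s * t))"
      proof (rule mult_mono[OF e1 e2])
        have "0 \<le> p * s + (1-p)" using p0 p1 s0 by simp
        then show "0 \<le> (p * s + (1-p)) ^ n" by simp
      qed simp
      then have "q \<le> exp (s * t) * (x * exp (2 * s * t))" by (rule order.trans[OF q1])
      also have "\<dots> = x * exp (3 * s * t)"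
      proof -
        have e3: "3 * s * t = s * t + 2 * s * t" by (simp add: algebra_simps)
        have "exp (3 * s * t) = exp (s * t) * exp (2 * s * t)" unfolding e3 exp_add by (rule refl)
        then show ?thesis by simp
      qed
      finally show ?thesis .
    qed
    define z where "z = exp (3 * s * t)"
    define y where "y = (1 - p) ^ n * real n"
    have y0: "y > 0" using x0 nr by (simp add: y_def x_def)
    have z0: "z > 0" by (simp add: z_def)
    have choose: "real (n choose b) \<le> real n ^ b"
    proof (cases "b \<le> n")
      case True
      then show ?thesis using binomial_le_pow[OF True] by (metis of_nat_le_iff of_nat_power)
    next
      case False
      then have "n < b" by simp
      then show ?thesis by (simp add: binomial_eq_0)
    qed
    have P2: "real (n choose b) * q ^ b \<le> (y * z) ^ b"
    proof -
      have "real (n choose b) * q ^ b \<le> real n ^ b * (x * z) ^ b"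
        using choose q0 qb by (intro mult_mono power_mono) (auto simp: z_def)
      also have "\<dots> = (y * z) ^ b" by (simp add: y_def x_def power_mult_distrib mult_ac)
      finally show ?thesis .
    qed
    have key: "y * z ^ (4 * b) \<le> 1"
    proof -
      have zz0: "z ^ (4 * b) = exp (real (4 * b) * (3 * s * t))"
        unfolding z_def by (rule exp_of_nat_mult[symmetric])
      have "real (4 * b) * (3 * s * t) = (12 * real b * s) * t" by (simp add: algebra_simps)
      then have zz: "z ^ (4 * b) = exp (\<delta> * t)" using zz0 bs by simp
      have "x \<le> exp (- p) ^ n" unfolding x_def
        using p1 by (intro power_mono) (auto intro: exp_ge_add_one_self[of "-p", simplified])
      also have "\<dots> = exp (- t)" by (simp add: t_def exp_of_nat_mult[symmetric] mult_ac)
      finally have xt: "x \<le> exp (- t)" .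
      have "ln (real n) \<le> t / (1 + c\<^sub>0)" using t_ge c0 by (simp add: t_def field_simps mult_ac)
      then have "exp (ln (real n)) \<le> exp (t / (1 + c\<^sub>0))" by simp
      then have nt: "real n \<le> exp (t / (1 + c\<^sub>0))" using nr by simp
      have "y * z ^ (4 * b) \<le> exp (- t) * exp (t / (1 + c\<^sub>0)) * exp (\<delta> * t)"
        unfolding y_def zz using xt nt x0 nr
        by (intro mult_right_mono mult_mono) (auto simp: x_def)
      also have "\<dots> = exp (- t + t / (1 + c\<^sub>0) + \<delta> * t)" by (simp only: exp_add)
      also have "- t + t / (1 + c\<^sub>0) + \<delta> * t = 0"
        using c0 by (simp add: \<delta>_def field_simps)
      finally show ?thesis by simp
    qed
    define w where "w = y powr (1/4) * z ^ b"
    have w0: "w \<ge> 0" unfolding w_def using z0 by (intro mult_nonneg_nonneg) auto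
    have a4: "(y powr (1/4)) ^ 4 = y" using y0 by (simp add: powr_power)
    have z4: "z ^ (4 * b) = (z ^ b) ^ 4" by (metis power_mult mult.commute)
    have "w ^ 4 = (y powr (1/4)) ^ 4 * (z ^ b) ^ 4" by (simp add: w_def power_mult_distrib)
    then have "w ^ 4 = y * z ^ (4 * b)" by (simp only: a4 z4)
    then have "w ^ 4 \<le> 1" using key by simp
    then have w1: "w \<le> 1" using w0 power_le_one_iff[OF w0, of 4] by simp
    have "(y * z) ^ b = y powr (real \<beta> + 3/4) * w"
    proof -
      have "(y * z) ^ b = y powr (real b) * z ^ b" using y0 by (simp add: power_mult_distrib powr_realpow)
      also have "real b = (real \<beta> + 3/4) + 1/4" by (simp add: b_def)
      also have "y powr ((real \<beta> + 3/4) + 1/4) * z ^ b = y powr (real \<beta> + 3/4) * w"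
        by (simp only: powr_add w_def mult.assoc)
      finally show ?thesis .
    qed
    also have "\<dots> \<le> y powr (real \<beta> + 3/4)" using w1 by (simp add: mult_left_le)
    finally have "(y * z) ^ b \<le> y powr (real \<beta> + 3/4)" .
    with P P2 show "measure_pmf.prob (bernoulli_matrix n p) {A. card (sparse_cols n A (lam * p * real n)) \<ge> \<beta> + 1}
             \<le> ((1 - p) ^ n * real n) powr (real \<beta> + 3/4)"
      unfolding y_def by linarith
  qed
qed

end
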